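(* In the setting described in the context, the function $\mathcal{V}$ is continuous on $\mathcal{K}_{\mathcal{D}_{\mathcal{A}}}(\mathbb{R}^n):=\{X\in\mathcal{K}(\mathbb{R}^n): X\cap\mathcal{D}_{\mathcal{A}}\neq\emptyset\}$ with respect to the Hausdorff distance.
   Context: Let $\|\cdot\|$ be a norm on $\mathbb{R}^n$ and $\mathrm{dist}(x,\Omega):=\inf_{y\in\Omega}\|x-y\|$. Let $\mathcal{K}(\mathbb{R}^n)$ denote the nonempty compact subsets of $\mathbb{R}^n$, equipped with the Hausdorff distance $d_H(X,Y):=\max\{\sup_{x\in X}\mathrm{dist}(x,Y),\sup_{y\in Y}\mathrm{dist}(y,X)\}$. Consider $x_{k+1}=f(x_k,u_k)$ with $f:\mathbb{R}^n\times\mathbb{R}^m\to\mathbb{R}^n$ continuous and inputs $u_k\in U$, $U\subset\mathbb{R}^m$ nonempty compact. For $x\in\mathbb{R}^n$ and $\pi:\mathbb{Z}_+\to U$, $\varphi_x^\pi(0)=x$, $\varphi_x^\pi(k+1)=f(\varphi_x^\pi(k),\pi(k))$; $\mathcal{R}(X,k):=\{\varphi_x^\pi(k):x\in X,\pi\in U^{\mathbb{Z}_+}\}$. Let $\mathcal{A}\in\mathcal{K}(\mathbb{R}^n)$ be controlled invariant (every $x\in\mathcal{A}$ admits $u\in U$ with $f(x,u)\in\mathcal{A}$). Assume local $\ell_p$-stabilizability: there exist $r>0$, $M\ge1$, $p>0$, $\lambda:[0,r]\times\mathbb{Z}_+\to\mathbb{R}_+$ such that (1) for each $k$, $s\mapsto\lambda(s,k)$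 is continuous, nondecreasing, $\lambda(0,k)=0$; for each $s$, $k\mapsto\lambda(s,k)$ is nonincreasing, $\lambda(s,0)\le s$; (2) $\sum_{k}\lambda(r,k)^p<\infty$; (3) for every $x$ with $\mathrm{dist}(x,\mathcal{A})\le r$ there is $\pi\in U^{\mathbb{Z}_+}$ with $\mathrm{dist}(\varphi_x^\pi(k),\mathcal{A})\le M\lambda(\mathrm{dist}(x,\mathcal{A}),k)$ for all $k$. Let $\mathcal{D}_{\mathcal{A}}:=\{x:\exists\pi\in U^{\mathbb{Z}_+},\ \lim_{k\to\infty}\mathrm{dist}(\varphi_x^\pi(k),\mathcal{A})=0\}$. Let $\alpha:\mathbb{R}^n\to\mathbb{R}_+$ be continuous with $\underline{\alpha}\,\mathrm{dist}(x,\mathcal{A})^{\bar p}\le\alpha(x)\le\overline{\alpha}\,\mathrm{dist}(x,\mathcal{A})^{\bar p}$, constants $\underline{\alpha},\overline{\alpha}>0$, $\bar p\ge p$. Define $\Psi(X):=\inf_{y\in X}\alpha(y)$ and $\mathcal{V}(X):=\sum_{k=0}^\infty\Psi(\mathcal{R}(X,k))\in[0,\infty]$. *)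

theory Defs
  imports "HOL-Analysis.Analysis"
begin

definition is_norm :: "(real^'n \<Rightarrow> real) \<Rightarrow> bool" where
  "is_norm nrm \<longleftrightarrow>
     (\<forall>x. 0 \<le> nrm x) \<and> (\<forall>x. nrm x = 0 \<longleftrightarrow> x = 0) \<and>
     (\<forall>c x. nrm (c *\<^sub>R x) = \<bar>c\<bar> * nrm x) \<and>
     (\<forall>x y. nrm (x + y) \<le> nrm x + nrm y)"

definition ndist :: "(real^'n \<Rightarrow> real) \<Rightarrow> real^'n \<Rightarrow> (real^'n) set \<Rightarrow> real" where
  "ndist nrm x \<Omega> = Inf ((\<lambda>y. nrm (x - y)) ` \<Omega>)"

text \<open>Hausdorff distance (used on nonempty compact sets).\<close>
definition nhausdist :: "(real^'n \<Rightarrow> real) \<Rightarrow> (real^'n) set \<Rightarrow> (real^'n) set \<Rightarrow> real" where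
  "nhausdist nrm X Y = max (Sup ((\<lambda>x. ndist nrm x Y) ` X)) (Sup ((\<lambda>y. ndist nrm y X) ` Y))"

primrec traj :: "('x \<Rightarrow> 'u \<Rightarrow> 'x) \<Rightarrow> 'x \<Rightarrow> (nat \<Rightarrow> 'u) \<Rightarrow> nat \<Rightarrow> 'x" where
  "traj f x \<pi> 0 = x"
| "traj f x \<pi> (Suc k) = f (traj f x \<pi> k) (\<pi> k)"

definition reach :: "('x \<Rightarrow> 'u \<Rightarrow> 'x) \<Rightarrow> 'u set \<Rightarrow> 'x set \<Rightarrow> nat \<Rightarrow> 'x set" where
  "reach f U X k = {traj f x \<pi> k | x \<pi>. x \<in> X \<and> (\<forall>j. \<pi> j \<in> U)}"

definition domA :: "(real^'n \<Rightarrow> real) \<Rightarrow> (real^'n \<Rightarrow> 'u \<Rightarrow> real^'n) \<Rightarrow> 'u set \<Rightarrow> (real^'n) set \<Rightarrow> (real^'n) set" where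
  "domA nrm f U A = {x. \<exists>\<pi>. (\<forall>j. \<pi> j \<in> U) \<and> (\<lambda>k. ndist nrm (traj f x \<pi> k) A) \<longlonglongrightarrow> 0}"

definition Psi :: "('x \<Rightarrow> real) \<Rightarrow> 'x set \<Rightarrow> real" where
  "Psi \<alpha> X = Inf (\<alpha> ` X)"

definition Vfun :: "('x \<Rightarrow> real) \<Rightarrow> ('x \<Rightarrow> 'u \<Rightarrow> 'x) \<Rightarrow> 'u set \<Rightarrow> 'x set \<Rightarrow> ennreal" where
  "Vfun \<alpha> f U X = (\<Sum>k. ennreal (Psi \<alpha> (reach f U X k)))"

end

theory Submission imports Defs begin


lemma nrm_props:
  assumes "is_norm nrm"
  shows "nrm 0 = 0" "\<And>x. 0 \<le> nrm x" "\<And>x. nrm (- x) = nrm x"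
    "\<And>x y. nrm (x + y) \<le> nrm x + nrm y" "\<And>c x. nrm (c *\<^sub>R x) = \<bar>c\<bar> * nrm x"
    "\<And>x. nrm x = 0 \<longleftrightarrow> x = 0"
proof -
  show "nrm 0 = 0" using assms unfolding is_norm_def by blast
  show "\<And>x. 0 \<le> nrm x" using assms unfolding is_norm_def by blast
  show "\<And>x y. nrm (x + y) \<le> nrm x + nrm y" using assms unfolding is_norm_def by blast
  show "\<And>c x. nrm (c *\<^sub>R x) = \<bar>c\<bar> * nrm x" using assms unfolding is_norm_def by blast
  show "\<And>x. nrm x = 0 \<longleftrightarrow> x = 0" using assms unfolding is_norm_def by blast
  fix x
  have "nrm ((-1) *\<^sub>R x) = \<bar>-1\<bar> * nrm x" using assms unfolding is_norm_def by blast
  then show "nrm (- x) = nrm x" by simp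
qed

lemma nrm_diff_tri:
  assumes "is_norm nrm"
  shows "nrm (x - z) \<le> nrm (x - y) + nrm (y - z)"
  using nrm_props(4)[OF assms, of "x - y" "y - z"] by simp

lemma nrm_sum:
  assumes "is_norm nrm"
  shows "nrm (sum g S) \<le> sum (\<lambda>i. nrm (g i)) S"
proof (induction S rule: infinite_finite_induct)
  case (infinite A) then show ?case using nrm_props(1)[OF assms] by simp
next
  case empty then show ?case using nrm_props(1)[OF assms] by simp
next
  case (insert x F)
  then show ?case using nrm_props(4)[OF assms, of "g x" "sum g F"] by simp
qed

lemma nrm_upper:
  fixes nrm :: "real^'n \<Rightarrow> real"
  assumes "is_norm nrm"
  shows "\<exists>C>0. \<forall>x. nrm x \<le> C * norm x"
proof -
  define C where "C = 1 + (\<Sum>i\<in>UNIV. nrm (axis i (1::real) :: real^'n))"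
  have C0: "(\<Sum>i\<in>UNIV. nrm (axis i (1::real) :: real^'n)) \<ge> 0"
    by (intro sum_nonneg) (simp add: nrm_props[OF assms])
  have "nrm x \<le> C * norm x" for x :: "real^'n"
  proof -
    have "x = (\<Sum>i\<in>UNIV. (x$i) *\<^sub>R axis i 1)"
      using basis_expansion[of x] by (simp add: scalar_mult_eq_scaleR)
    then have "nrm x \<le> (\<Sum>i\<in>UNIV. nrm ((x$i) *\<^sub>R axis i 1))"
      using nrm_sum[OF assms, of "\<lambda>i. (x$i) *\<^sub>R axis i 1" UNIV] by simp
    also have "\<dots> = (\<Sum>i\<in>UNIV. \<bar>x$i\<bar> * nrm (axis i 1 :: real^'n))"
      by (simp add: nrm_props[OF assms])
    also have "\<dots> \<le> (\<Sum>i\<in>UNIV. norm x * nrm (axis i 1 :: real^'n))"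
      by (intro sum_mono mult_right_mono) (auto simp: component_le_norm_cart nrm_props[OF assms])
    also have "\<dots> \<le> C * norm x" using C0 by (simp add: C_def sum_distrib_left[symmetric] algebra_simps)
    finally show ?thesis .
  qed
  moreover have "C > 0" using C0 by (simp add: C_def)
  ultimately show ?thesis by blast
qed

lemma nrm_lower:
  fixes nrm :: "real^'n \<Rightarrow> real"
  assumes "is_norm nrm"
  shows "\<exists>c>0. \<forall>x. norm x \<le> c * nrm x"
proof -
  obtain C where C: "C > 0" "\<forall>x. nrm x \<le> C * norm x" using nrm_upper[OF assms] by blast
  have cont: "continuous_on UNIV nrm"
  proof (rule continuous_on_iff[THEN iffD2], intro ballI allI impI)
    fix x :: "real^'n" and e :: real assume "e > 0"
    show "\<exists>d>0. \<forall>x'\<in>UNIV. dist x' x < d \<longrightarrow> dist (nrm x') (nrm x) < e"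
    proof (intro exI[of _ "e / C"] conjI ballI impI)
      show "e / C > 0" using \<open>e>0\<close> C by simp
      fix y :: "real^'n" assume "dist y x < e / C"
      have a: "nrm y \<le> nrm x + nrm (y - x)" using nrm_props(4)[OF assms, of x "y - x"] by simp
      have b: "nrm x \<le> nrm y + nrm (x - y)" using nrm_props(4)[OF assms, of y "x - y"] by simp
      have c: "nrm (x - y) = nrm (y - x)" using nrm_props(3)[OF assms, of "y - x"] by simp
      have "nrm (y - x) \<le> C * norm (y - x)" using C by blast
      also have "\<dots> < e" using \<open>dist y x < e / C\<close> C by (simp add: dist_norm field_simps)
      finally show "dist (nrm y) (nrm x) < e" using a b c by (simp add: dist_real_def abs_less_iff)
    qed
  qed
  have "compact (sphere (0::real^'n) 1)" by simp
  moreover have "sphere (0::real^'n) 1 \<noteq> {}" by (simp add: sphere_def) (metis norm_axis_1)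
  ultimately obtain z where z: "z \<in> sphere 0 1" "\<forall>y\<in>sphere 0 1. nrm z \<le> nrm y"
    using continuous_attains_inf[of "sphere (0::real^'n) 1" nrm] continuous_on_subset[OF cont] by blast
  have "z \<noteq> 0" using z by auto
  then have m: "nrm z > 0" using nrm_props(2,6)[OF assms, of z] by auto
  have "norm x \<le> (1 / nrm z) * nrm x" for x :: "real^'n"
  proof (cases "x = 0")
    case True then show ?thesis by (simp add: nrm_props[OF assms])
  next
    case False
    then have "(1 / norm x) *\<^sub>R x \<in> sphere 0 1" by simp
    then have "nrm z \<le> nrm ((1 / norm x) *\<^sub>R x)" using z by blast
    also have "\<dots> = nrm x / norm x" by (simp add: nrm_props[OF assms])
    finally have "nrm z * norm x \<le> nrm x" using False by (simp add: field_simps)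
    then show ?thesis using m by (simp add: field_simps)
  qed
  then show ?thesis using m by (intro exI[of _ "1 / nrm z"]) auto
qed


lemma ndist_nonneg:
  assumes "is_norm nrm" "A \<noteq> {}"
  shows "0 \<le> ndist nrm x A"
  unfolding ndist_def using assms by (intro cInf_greatest) (auto simp: nrm_props)

lemma ndist_le:
  assumes "is_norm nrm" "a \<in> A"
  shows "ndist nrm x A \<le> nrm (x - a)"
  unfolding ndist_def using assms
  by (intro cInf_lower) (auto simp: bdd_below_def nrm_props intro!: exI[of _ 0])

lemma ndist_lip:
  assumes "is_norm nrm" "A \<noteq> {}"
  shows "ndist nrm x A \<le> nrm (x - z) + ndist nrm z A"
proof -
  have "ndist nrm x A - nrm (x - z) \<le> ndist nrm z A"
    unfolding ndist_def[of nrm z]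
  proof (rule cInf_greatest)
    show "(\<lambda>y. nrm (z - y)) ` A \<noteq> {}" using assms by simp
    fix v assume "v \<in> (\<lambda>y. nrm (z - y)) ` A"
    then obtain a where a: "a \<in> A" "v = nrm (z - a)" by blast
    have "ndist nrm x A \<le> nrm (x - a)" by (rule ndist_le[OF assms(1) a(1)])
    also have "\<dots> \<le> nrm (x - z) + nrm (z - a)" by (rule nrm_diff_tri[OF assms(1)])
    finally show "ndist nrm x A - nrm (x - z) \<le> v" using a by simp
  qed
  then show ?thesis by simp
qed

lemma ndist_less:
  assumes "is_norm nrm" "A \<noteq> {}" "ndist nrm x A < d"
  shows "\<exists>a\<in>A. nrm (x - a) < d"
proof -
  have "Inf ((\<lambda>y. nrm (x - y)) ` A) < d" using assms(3) by (simp add: ndist_def)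
  moreover have "bdd_below ((\<lambda>y. nrm (x - y)) ` A)"
    using assms(1) by (auto simp: bdd_below_def nrm_props intro!: exI[of _ 0])
  ultimately show ?thesis
    using cInf_less_iff[of "(\<lambda>y. nrm (x - y)) ` A" d] assms(2) by auto
qed

lemma ndist_bdd:
  fixes nrm :: "real^'n \<Rightarrow> real"
  assumes "is_norm nrm" "compact Y" "X \<noteq> {}"
  shows "bdd_above ((\<lambda>y. ndist nrm y X) ` Y)"
proof -
  obtain x1 where x1: "x1 \<in> X" using assms by blast
  obtain C where C: "C > 0" "\<forall>x. nrm x \<le> C * norm x" using nrm_upper[OF assms(1)] by blast
  obtain B where B: "\<forall>y\<in>Y. norm y \<le> B" using compact_imp_bounded[OF assms(2)]
    by (auto simp: bounded_iff)
  have "ndist nrm y X \<le> C * (B + norm x1)" if "y \<in> Y" for y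
  proof -
    have "ndist nrm y X \<le> nrm (y - x1)" by (rule ndist_le[OF assms(1) x1])
    also have "\<dots> \<le> C * norm (y - x1)" using C by blast
    also have "\<dots> \<le> C * (B + norm x1)"
      using C B that norm_triangle_ineq4[of y x1] by (intro mult_left_mono) auto
    finally show ?thesis .
  qed
  then show ?thesis by (auto simp: bdd_above_def)
qed

lemma haus_close:
  fixes nrm :: "real^'n \<Rightarrow> real"
  assumes "is_norm nrm" "compact X" "compact Y" "X \<noteq> {}" "Y \<noteq> {}"
    "nhausdist nrm Y X < d"
  shows "\<forall>y\<in>Y. \<exists>x\<in>X. nrm (y - x) < d" "\<forall>x\<in>X. \<exists>y\<in>Y. nrm (x - y) < d"
proof -
  show "\<forall>y\<in>Y. \<exists>x\<in>X. nrm (y - x) < d"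
  proof
    fix y assume y: "y \<in> Y"
    have "ndist nrm y X \<le> Sup ((\<lambda>y. ndist nrm y X) ` Y)"
      using y ndist_bdd[OF assms(1,3,4)] by (intro cSup_upper) auto
    also have "\<dots> < d" using assms(6) by (simp add: nhausdist_def)
    finally show "\<exists>x\<in>X. nrm (y - x) < d" using ndist_less[OF assms(1,4)] by blast
  qed
  show "\<forall>x\<in>X. \<exists>y\<in>Y. nrm (x - y) < d"
  proof
    fix x assume x: "x \<in> X"
    have "ndist nrm x Y \<le> Sup ((\<lambda>y. ndist nrm y Y) ` X)"
      using x ndist_bdd[OF assms(1,2,5)] by (intro cSup_upper) auto
    also have "\<dots> < d" using assms(6) by (simp add: nhausdist_def)
    finally show "\<exists>y\<in>Y. nrm (x - y) < d" using ndist_less[OF assms(1,5)] by blast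
  qed
qed

lemma traj_cong: "(\<forall>i<k. \<pi> i = \<pi>' i) \<Longrightarrow> traj f x \<pi> k = traj f x \<pi>' k"
  by (induction k) auto

lemma traj_append:
  "traj f y (\<lambda>i. if i < K then \<pi>0 i else \<pi>1 (i - K)) (K + j) = traj f (traj f y \<pi>0 K) \<pi>1 j"
proof (induction j)
  case 0
  then show ?case by (simp add: traj_cong)
next
  case (Suc j)
  then show ?case by simp
qed

lemma nhausdist_self:
  fixes nrm :: "real^'n \<Rightarrow> real"
  shows True by simp


lemma traj_in_reach: "x \<in> C \<Longrightarrow> (\<forall>j::nat. \<pi> j \<in> U) \<Longrightarrow> traj f x \<pi> k \<in> reach f U C k"
  unfolding reach_def by blast

lemma reach_bounded:
  fixes f :: "'a::{real_normed_vector,heine_borel} \<Rightarrow> 'b::heine_borel \<Rightarrow> 'a"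
  assumes fc: "continuous_on UNIV (\<lambda>(x, u). f x u)" and U: "compact U" and C: "compact C"
  shows "bounded (reach f U C k)"
proof (induction k)
  case 0
  have "reach f U C 0 \<subseteq> C" unfolding reach_def by auto
  then show ?case using compact_imp_bounded[OF C] bounded_subset by blast
next
  case (Suc k)
  have cpt: "compact (closure (reach f U C k) \<times> U)"
    using Suc U by (intro compact_Times) (auto simp: compact_closure)
  have "compact ((\<lambda>(x, u). f x u) ` (closure (reach f U C k) \<times> U))"
    by (rule compact_continuous_image[OF continuous_on_subset[OF fc] cpt]) auto
  moreover have "reach f U C (Suc k) \<subseteq> (\<lambda>(x, u). f x u) ` (closure (reach f U C k) \<times> U)"
  proof
    fix z assume "z \<in> reach f U C (Suc k)"
    then obtain x \<pi> where z: "x \<in> C" "\<forall>j::nat. \<pi> j \<in> U" "z = traj f x \<pi> (Suc k)"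
      unfolding reach_def by blast
    then have "(traj f x \<pi> k, \<pi> k) \<in> closure (reach f U C k) \<times> U"
      using traj_in_reach[of x C \<pi> U f k] closure_subset by blast
    then show "z \<in> (\<lambda>(x, u). f x u) ` (closure (reach f U C k) \<times> U)"
      using z by (auto intro!: image_eqI[of _ _ "(traj f x \<pi> k, \<pi> k)"])
  qed
  ultimately show ?case using compact_imp_bounded bounded_subset by blast
qed

definition thick :: "'a::real_normed_vector set \<Rightarrow> 'a set" where
  "thick S = {a + b | a b. a \<in> closure S \<and> b \<in> cball 0 1}"

lemma thick_compact: "bounded (S::'a::{real_normed_vector,heine_borel} set) \<Longrightarrow> compact (thick S)"
  unfolding thick_def by (intro compact_sums) (auto simp: compact_closure)

lemma thick_mem: "a \<in> S \<Longrightarrow> dist b a \<le> 1 \<Longrightarrow> b \<in> thick S"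
  unfolding thick_def
  by (rule CollectI, rule exI[of _ a], rule exI[of _ "b - a"])
     (auto simp: closure_subset[THEN subsetD] dist_norm norm_minus_commute)

lemma traj_unif:
  fixes f :: "'a::{real_normed_vector,heine_borel} \<Rightarrow> 'b::heine_borel \<Rightarrow> 'a"
  assumes fc: "continuous_on UNIV (\<lambda>(x, u). f x u)" and U: "compact U" and C: "compact C"
  shows "\<forall>\<epsilon>>0. \<exists>\<delta>>0. \<forall>x\<in>C. \<forall>y. dist y x < \<delta> \<longrightarrow>
           (\<forall>\<pi>. (\<forall>j::nat. \<pi> j \<in> U) \<longrightarrow> dist (traj f y \<pi> k) (traj f x \<pi> k) < \<epsilon>)"
proof (induction k)
  case 0
  then show ?case by (auto intro: exI[of _ 1])
next
  case (Suc k)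
  show ?case
  proof (intro allI impI)
    fix \<epsilon> :: real assume e: "\<epsilon> > 0"
    define T where "T = thick (reach f U C k)"
    have cT: "compact (T \<times> U)" unfolding T_def
      using thick_compact[OF reach_bounded[OF fc U C]] U by (intro compact_Times) auto
    have "uniformly_continuous_on (T \<times> U) (\<lambda>(x, u). f x u)"
      by (rule compact_uniformly_continuous[OF continuous_on_subset[OF fc] cT]) auto
    then obtain \<eta> where eta: "\<eta> > 0" "\<forall>p\<in>T \<times> U. \<forall>q\<in>T \<times> U. dist q p < \<eta> \<longrightarrow>
        dist ((\<lambda>(x, u). f x u) q) ((\<lambda>(x, u). f x u) p) < \<epsilon>"
      unfolding uniformly_continuous_on_def using e by metis
    obtain \<delta> where d: "\<delta> > 0" "\<forall>x\<in>C. \<forall>y. dist y x < \<delta> \<longrightarrow>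
           (\<forall>\<pi>. (\<forall>j::nat. \<pi> j \<in> U) \<longrightarrow> dist (traj f y \<pi> k) (traj f x \<pi> k) < min \<eta> 1)"
      using Suc[rule_format, of "min \<eta> 1"] eta by auto
    show "\<exists>\<delta>>0. \<forall>x\<in>C. \<forall>y. dist y x < \<delta> \<longrightarrow>
           (\<forall>\<pi>. (\<forall>j::nat. \<pi> j \<in> U) \<longrightarrow> dist (traj f y \<pi> (Suc k)) (traj f x \<pi> (Suc k)) < \<epsilon>)"
    proof (intro exI[of _ \<delta>] conjI d(1) ballI allI impI)
      fix x y \<pi> assume x: "x \<in> C" and y: "dist y x < \<delta>" and pi: "\<forall>j::nat. \<pi> j \<in> U"
      define a where "a = traj f x \<pi> k"
      define b where "b = traj f y \<pi> k"
      have ab: "dist b a < min \<eta> 1" using d x y pi by (simp add: a_def b_def)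
      have aR: "a \<in> reach f U C k" unfolding a_def by (rule traj_in_reach[OF x pi])
      have "a \<in> T" unfolding T_def by (rule thick_mem[OF aR]) simp
      moreover have "b \<in> T" unfolding T_def using ab by (intro thick_mem[OF aR]) auto
      moreover have "dist (b, \<pi> k) (a, \<pi> k) < \<eta>" using ab by (simp add: dist_Pair_Pair)
      ultimately have "dist (f b (\<pi> k)) (f a (\<pi> k)) < \<epsilon>" using eta(2) pi by fastforce
      then show "dist (traj f y \<pi> (Suc k)) (traj f x \<pi> (Suc k)) < \<epsilon>"
        by (simp add: a_def b_def)
    qed
  qed
qed

lemma g_unif:
  fixes f :: "'a::{real_normed_vector,heine_borel} \<Rightarrow> 'b::heine_borel \<Rightarrow> 'a" and g :: "'a \<Rightarrow> real"
  assumes fc: "continuous_on UNIV (\<lambda>(x, u). f x u)" and U: "compact U" and C: "compact C"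
    and gc: "continuous_on UNIV g" and e: "\<epsilon> > 0"
  shows "\<exists>\<delta>>0. \<forall>x\<in>C. \<forall>y. dist y x < \<delta> \<longrightarrow>
           (\<forall>\<pi>. (\<forall>j::nat. \<pi> j \<in> U) \<longrightarrow> \<bar>g (traj f y \<pi> k) - g (traj f x \<pi> k)\<bar> < \<epsilon>)"
proof -
  define T where "T = thick (reach f U C k)"
  have cT: "compact T" unfolding T_def
    using thick_compact[OF reach_bounded[OF fc U C]] by auto
  have "uniformly_continuous_on T g"
    by (rule compact_uniformly_continuous[OF continuous_on_subset[OF gc] cT]) auto
  then obtain \<eta> where eta: "\<eta> > 0" "\<forall>p\<in>T. \<forall>q\<in>T. dist q p < \<eta> \<longrightarrow> dist (g q) (g p) < \<epsilon>"
    unfolding uniformly_continuous_on_def using e by metis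
  obtain \<delta> where d: "\<delta> > 0" "\<forall>x\<in>C. \<forall>y. dist y x < \<delta> \<longrightarrow>
         (\<forall>\<pi>. (\<forall>j::nat. \<pi> j \<in> U) \<longrightarrow> dist (traj f y \<pi> k) (traj f x \<pi> k) < min \<eta> 1)"
    using traj_unif[OF fc U C, rule_format, of "min \<eta> 1" k] eta by auto
  show ?thesis
  proof (intro exI[of _ \<delta>] conjI d(1) ballI allI impI)
    fix x y \<pi> assume x: "x \<in> C" and y: "dist y x < \<delta>" and pi: "\<forall>j::nat. \<pi> j \<in> U"
    define a where "a = traj f x \<pi> k"
    define b where "b = traj f y \<pi> k"
    have ab: "dist b a < min \<eta> 1" using d x y pi by (simp add: a_def b_def)
    have aR: "a \<in> reach f U C k" unfolding a_def by (rule traj_in_reach[OF x pi])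
    have "a \<in> T" unfolding T_def by (rule thick_mem[OF aR]) simp
    moreover have "b \<in> T" unfolding T_def using ab by (intro thick_mem[OF aR]) auto
    ultimately have "dist (g b) (g a) < \<epsilon>" using eta(2) ab by auto
    then show "\<bar>g (traj f y \<pi> k) - g (traj f x \<pi> k)\<bar> < \<epsilon>"
      by (simp add: a_def b_def dist_real_def)
  qed
qed

lemma g_unif_fin:
  fixes f :: "'a::{real_normed_vector,heine_borel} \<Rightarrow> 'b::heine_borel \<Rightarrow> 'a" and g :: "'a \<Rightarrow> real"
  assumes fc: "continuous_on UNIV (\<lambda>(x, u). f x u)" and U: "compact U" and C: "compact C"
    and gc: "continuous_on UNIV g" and e: "\<epsilon> > 0"
  shows "\<exists>\<delta>>0. \<forall>k<K. \<forall>x\<in>C. \<forall>y. dist y x < \<delta> \<longrightarrow>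
           (\<forall>\<pi>. (\<forall>j::nat. \<pi> j \<in> U) \<longrightarrow> \<bar>g (traj f y \<pi> k) - g (traj f x \<pi> k)\<bar> < \<epsilon>)"
proof (induction K)
  case 0
  then show ?case by (auto intro: exI[of _ 1])
next
  case (Suc K)
  then obtain d1 where d1: "d1 > 0" "\<forall>k<K. \<forall>x\<in>C. \<forall>y. dist y x < d1 \<longrightarrow>
           (\<forall>\<pi>. (\<forall>j::nat. \<pi> j \<in> U) \<longrightarrow> \<bar>g (traj f y \<pi> k) - g (traj f x \<pi> k)\<bar> < \<epsilon>)" by blast
  obtain d2 where d2: "d2 > 0" "\<forall>x\<in>C. \<forall>y. dist y x < d2 \<longrightarrow>
           (\<forall>\<pi>. (\<forall>j::nat. \<pi> j \<in> U) \<longrightarrow> \<bar>g (traj f y \<pi> K) - g (traj f x \<pi> K)\<bar> < \<epsilon>)"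
    using g_unif[OF fc U C gc e, of K] by blast
  show ?case
  proof (intro exI[of _ "min d1 d2"] conjI allI impI ballI)
    show "min d1 d2 > 0" using d1 d2 by simp
    fix k x y \<pi> assume "k < Suc K" "x \<in> C" "dist y x < min d1 d2" "\<forall>j::nat. \<pi> j \<in> U"
    then show "\<bar>g (traj f y \<pi> k) - g (traj f x \<pi> k)\<bar> < \<epsilon>"
      using d1 d2 by (cases "k < K") (auto simp: less_Suc_eq)
  qed
qed


lemma lam_tail:
  fixes lam :: "real \<Rightarrow> nat \<Rightarrow> real"
  assumes r_pos: "r > 0" and M_ge: "M \<ge> 1" and p_pos: "p > 0"
    and lam_nonneg: "\<forall>s\<in>{0..r}. \<forall>k. lam s k \<ge> 0"
    and lam_cont: "\<forall>k. continuous_on {0..r} (\<lambda>s. lam s k)"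
    and lam_mono: "\<forall>k. mono_on {0..r} (\<lambda>s. lam s k)"
    and lam_zero: "\<forall>k. lam 0 k = 0"
    and lam_antimono: "\<forall>s\<in>{0..r}. \<forall>k l. k \<le> l \<longrightarrow> lam s l \<le> lam s k"
    and lam_init: "\<forall>s\<in>{0..r}. lam s 0 \<le> s"
    and lam_summable: "summable (\<lambda>k. lam r k powr p)"
    and ahi: "\<alpha>hi > 0" and pbar_ge: "pbar \<ge> p" and e: "\<epsilon> > 0"
  shows "\<exists>\<eta>>0. \<eta> \<le> r \<and> (\<forall>s\<in>{0..\<eta>}. summable (\<lambda>j. \<alpha>hi * (M * lam s j) powr pbar)
            \<and> (\<Sum>j. \<alpha>hi * (M * lam s j) powr pbar) \<le> \<epsilon>)"
proof -
  define g where "g s j = \<alpha>hi * (M * lam s j) powr pbar" for s j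
  have rr: "r \<in> {0..r}" using r_pos by simp
  have gnn: "0 \<le> g s j" for s j using ahi by (simp add: g_def)
  have gle: "g s j \<le> g r j" if "s \<in> {0..r}" for s j
  proof -
    have "lam s j \<le> lam r j" using lam_mono that rr by (auto simp: mono_on_def)
    then have "(M * lam s j) powr pbar \<le> (M * lam r j) powr pbar"
      using lam_nonneg that M_ge p_pos pbar_ge by (intro powr_mono2) auto
    then show ?thesis using ahi by (simp add: g_def)
  qed
  have lr: "lam r j \<le> r" for j
    using lam_antimono[rule_format, OF rr, of 0 j] lam_init[rule_format, OF rr] by simp
  have gr_sum: "summable (g r)"
  proof (rule summable_comparison_test'[where N=0])
    show "summable (\<lambda>j. (\<alpha>hi * (M * r) powr (pbar - p) * M powr p) * lam r j powr p)"
      by (intro summable_mult lam_summable)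
    fix j :: nat
    have l0: "0 \<le> lam r j" using lam_nonneg rr by blast
    have "(M * lam r j) powr pbar = (M * lam r j) powr (pbar - p) * (M * lam r j) powr p"
      by (simp add: powr_add[symmetric])
    also have "\<dots> \<le> (M * r) powr (pbar - p) * (M * lam r j) powr p"
      using l0 lr M_ge pbar_ge by (intro mult_right_mono powr_mono2) auto
    also have "\<dots> = (M * r) powr (pbar - p) * M powr p * lam r j powr p"
      using l0 M_ge by (simp add: powr_mult)
    finally have "(M * lam r j) powr pbar \<le> (M * r) powr (pbar - p) * M powr p * lam r j powr p" .
    then show "norm (g r j) \<le> (\<alpha>hi * (M * r) powr (pbar - p) * M powr p) * lam r j powr p"
      using ahi gnn[of r j] by (simp add: g_def mult.assoc)
  qed
  obtain J where J: "norm (\<Sum>i. g r (i + J)) < \<epsilon> / 2"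
    using suminf_exist_split[OF _ gr_sum, of "\<epsilon>/2"] e by auto
  define h where "h s = (\<Sum>j<J. g s j)" for s
  have tj: "((\<lambda>s. g s j) \<longlongrightarrow> 0) (at 0 within {0..r})" for j
  proof -
    have "((\<lambda>s. lam s j) \<longlongrightarrow> lam 0 j) (at 0 within {0..r})"
      using lam_cont r_pos by (auto simp: continuous_on_def)
    then have t1: "((\<lambda>s. M * lam s j) \<longlongrightarrow> 0) (at 0 within {0..r})"
      using lam_zero tendsto_mult_right_zero by fastforce
    have ev: "\<forall>\<^sub>F s in at 0 within {0..r}. 0 \<le> M * lam s j"
      unfolding eventually_at
    proof (intro exI[of _ 1] conjI ballI impI)
      fix s assume "s \<in> {0..r}"
      then show "0 \<le> M * lam s j" using lam_nonneg M_ge by simp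
    qed simp
    have "((\<lambda>s. (M * lam s j) powr pbar) \<longlongrightarrow> 0) (at 0 within {0..r})"
      by (rule tendsto_zero_powrI[OF t1 tendsto_const ev]) (use p_pos pbar_ge in simp)
    then show ?thesis unfolding g_def by (rule tendsto_mult_right_zero)
  qed
  have "(h \<longlongrightarrow> 0) (at 0 within {0..r})"
    unfolding h_def by (rule tendsto_null_sum) (rule tj)
  then have "\<forall>\<^sub>F s in at 0 within {0..r}. h s < \<epsilon> / 2"
    using e by (intro order_tendstoD(2)) auto
  then obtain d where d: "d > 0" "\<forall>s\<in>{0..r}. s \<noteq> 0 \<and> dist s 0 < d \<longrightarrow> h s < \<epsilon> / 2"
    unfolding eventually_at by blast
  have h0: "h 0 = 0" using lam_zero by (simp add: h_def g_def)
  define \<eta> where "\<eta> = min (d / 2) r"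
  show ?thesis
  proof (intro exI[of _ \<eta>] conjI ballI)
    show "\<eta> > 0" "\<eta> \<le> r" using d r_pos by (auto simp: \<eta>_def)
    fix s assume s: "s \<in> {0..\<eta>}"
    then have sr: "s \<in> {0..r}" by (auto simp: \<eta>_def)
    have hs: "h s < \<epsilon> / 2"
    proof (cases "s = 0")
      case True then show ?thesis using h0 e by simp
    next
      case False then show ?thesis using d s sr by (auto simp: \<eta>_def dist_real_def)
    qed
    have gs: "summable (g s)"
      by (rule summable_comparison_test'[OF gr_sum, where N=0]) (use gle[OF sr] gnn in auto)
    have sp: "suminf (g s) = (\<Sum>i. g s (i + J)) + h s"
      unfolding h_def by (rule suminf_split_initial_segment[OF gs])
    have le1: "(\<Sum>i. g s (i + J)) \<le> (\<Sum>i. g r (i + J))"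
      using gs gr_sum gle[OF sr] by (intro suminf_le) auto
    have le2: "(\<Sum>i. g r (i + J)) < \<epsilon> / 2" using J by simp
    have "suminf (g s) \<le> \<epsilon>" using sp le1 le2 hs by linarith
    have geq: "g s = (\<lambda>j. \<alpha>hi * (M * lam s j) powr pbar)" by (simp add: g_def fun_eq_iff)
    show "summable (\<lambda>j. \<alpha>hi * (M * lam s j) powr pbar)" using gs geq by simp
    show "(\<Sum>j. \<alpha>hi * (M * lam s j) powr pbar) \<le> \<epsilon>"
      using geq \<open>suminf (g s) \<le> \<epsilon>\<close> by simp
  qed
qed


lemma Psi_le:
  assumes "\<forall>x. \<alpha> x \<ge> (0::real)" "y \<in> Y" "\<forall>j::nat. \<pi> j \<in> U"
  shows "Psi \<alpha> (reach f U Y k) \<le> \<alpha> (traj f y \<pi> k)"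
  unfolding Psi_def using assms traj_in_reach[OF assms(2,3)]
  by (intro cInf_lower) (auto simp: bdd_below_def intro!: exI[of _ 0])

lemma reach_ne: "Y \<noteq> {} \<Longrightarrow> U \<noteq> {} \<Longrightarrow> reach f U Y k \<noteq> {}"
proof -
  assume "Y \<noteq> {}" "U \<noteq> {}"
  then obtain y u where "y \<in> Y" "u \<in> U" by blast
  then show ?thesis using traj_in_reach[of y Y "\<lambda>_. u" U f k] by blast
qed

lemma Psi_nonneg:
  assumes "\<forall>x. \<alpha> x \<ge> (0::real)" "Y \<noteq> {}" "U \<noteq> {}"
  shows "0 \<le> Psi \<alpha> (reach f U Y k)"
  unfolding Psi_def using assms reach_ne[OF assms(2,3)]
  by (intro cInf_greatest) auto

lemma Psi_close:
  fixes \<alpha> :: "'a::metric_space \<Rightarrow> real"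
  assumes a0: "\<forall>x. \<alpha> x \<ge> 0" and ne: "X \<noteq> {}" "Y \<noteq> {}" "U \<noteq> {}"
    and unif: "\<forall>x\<in>X. \<forall>y. dist y x < \<delta> \<longrightarrow>
           (\<forall>\<pi>. (\<forall>j::nat. \<pi> j \<in> U) \<longrightarrow> \<bar>\<alpha> (traj f y \<pi> k) - \<alpha> (traj f x \<pi> k)\<bar> < \<epsilon>)"
    and c1: "\<forall>y\<in>Y. \<exists>x\<in>X. dist y x < \<delta>" and c2: "\<forall>x\<in>X. \<exists>y\<in>Y. dist y x < \<delta>"
  shows "\<bar>Psi \<alpha> (reach f U Y k) - Psi \<alpha> (reach f U X k)\<bar> \<le> \<epsilon>"
proof -
  have "Psi \<alpha> (reach f U X k) - \<epsilon> \<le> Psi \<alpha> (reach f U Y k)"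
    unfolding Psi_def[of \<alpha> "reach f U Y k"]
  proof (rule cInf_greatest)
    show "\<alpha> ` reach f U Y k \<noteq> {}" using reach_ne[OF ne(2,3)] by blast
    fix v assume "v \<in> \<alpha> ` reach f U Y k"
    then obtain y \<pi> where y: "y \<in> Y" "\<forall>j. \<pi> j \<in> U" "v = \<alpha> (traj f y \<pi> k)"
      unfolding reach_def by blast
    obtain x where x: "x \<in> X" "dist y x < \<delta>" using c1 y by blast
    have "\<bar>\<alpha> (traj f y \<pi> k) - \<alpha> (traj f x \<pi> k)\<bar> < \<epsilon>" using unif x y by blast
    moreover have "Psi \<alpha> (reach f U X k) \<le> \<alpha> (traj f x \<pi> k)" by (rule Psi_le[OF a0 x(1) y(2)])
    ultimately show "Psi \<alpha> (reach f U X k) - \<epsilon> \<le> v" using y by linarith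
  qed
  moreover have "Psi \<alpha> (reach f U Y k) - \<epsilon> \<le> Psi \<alpha> (reach f U X k)"
    unfolding Psi_def[of \<alpha> "reach f U X k"]
  proof (rule cInf_greatest)
    show "\<alpha> ` reach f U X k \<noteq> {}" using reach_ne[OF ne(1,3)] by blast
    fix v assume "v \<in> \<alpha> ` reach f U X k"
    then obtain x \<pi> where x: "x \<in> X" "\<forall>j. \<pi> j \<in> U" "v = \<alpha> (traj f x \<pi> k)"
      unfolding reach_def by blast
    obtain y where y: "y \<in> Y" "dist y x < \<delta>" using c2 x by blast
    have "\<bar>\<alpha> (traj f y \<pi> k) - \<alpha> (traj f x \<pi> k)\<bar> < \<epsilon>" using unif x y by blast
    moreover have "Psi \<alpha> (reach f U Y k) \<le> \<alpha> (traj f y \<pi> k)" by (rule Psi_le[OF a0 y(1) x(2)])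
    ultimately show "Psi \<alpha> (reach f U Y k) - \<epsilon> \<le> v" using x by linarith
  qed
  ultimately show ?thesis by linarith
qed

lemma tail_lemma:
  fixes nrm :: "real^'n \<Rightarrow> real"
    and f :: "real^'n \<Rightarrow> real^'m \<Rightarrow> real^'n"
    and lam :: "real \<Rightarrow> nat \<Rightarrow> real"
  assumes norm: "is_norm nrm"
    and f_cont: "continuous_on UNIV (\<lambda>(x, u). f x u)"
    and U_compact: "compact U" and U_ne: "U \<noteq> {}" and A_ne: "A \<noteq> {}"
    and M_ge: "M \<ge> 1"
    and lam_nonneg: "\<forall>s\<in>{0..r}. \<forall>k. lam s k \<ge> 0"
    and stab: "\<forall>x. ndist nrm x A \<le> r \<longrightarrow>
                 (\<exists>\<pi>. (\<forall>j. \<pi> j \<in> U) \<and>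
                    (\<forall>k. ndist nrm (traj f x \<pi> k) A \<le> M * lam (ndist nrm x A) k))"
    and \<alpha>_nonneg: "\<forall>x. \<alpha> x \<ge> 0"
    and \<alpha>hi_pos: "\<alpha>hi > 0" and pbar_ge: "pbar \<ge> p" and p_pos: "p > 0"
    and \<alpha>_up: "\<forall>x. \<alpha> x \<le> \<alpha>hi * ndist nrm x A powr pbar"
    and eta: "\<eta> > 0" "\<eta> \<le> r" "\<forall>s\<in>{0..\<eta>}. summable (\<lambda>j. \<alpha>hi * (M * lam s j) powr pbar)
            \<and> (\<Sum>j. \<alpha>hi * (M * lam s j) powr pbar) \<le> \<epsilon>"
    and x0: "x0 \<in> domA nrm f U A"
  shows "\<exists>K \<delta>0. \<delta>0 > 0 \<and> (\<forall>Y. (\<exists>y\<in>Y. dist y x0 < \<delta>0) \<longrightarrow>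
            summable (\<lambda>j. Psi \<alpha> (reach f U Y (j + K))) \<and> (\<Sum>j. Psi \<alpha> (reach f U Y (j + K))) \<le> \<epsilon>)"
proof -
  obtain \<pi>0 where pi0: "\<forall>j. \<pi>0 j \<in> U" "(\<lambda>k. ndist nrm (traj f x0 \<pi>0 k) A) \<longlonglongrightarrow> 0"
    using x0 unfolding domA_def by blast
  have "\<forall>\<^sub>F k in sequentially. ndist nrm (traj f x0 \<pi>0 k) A < \<eta> / 2"
    using eta(1) by (intro order_tendstoD(2)[OF pi0(2)]) auto
  then obtain K where K: "ndist nrm (traj f x0 \<pi>0 K) A < \<eta> / 2"
    unfolding eventually_sequentially by blast
  obtain C where C: "C > 0" "\<forall>x. nrm x \<le> C * norm x" using nrm_upper[OF norm] by blast
  obtain \<delta>0 where d0: "\<delta>0 > 0" "\<forall>x\<in>{x0}. \<forall>y. dist y x < \<delta>0 \<longrightarrow>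
           (\<forall>\<pi>. (\<forall>j::nat. \<pi> j \<in> U) \<longrightarrow> dist (traj f y \<pi> K) (traj f x \<pi> K) < \<eta> / (2 * C))"
    using traj_unif[OF f_cont U_compact, of "{x0}", rule_format, of "\<eta> / (2 * C)" K] eta C
    by auto
  show ?thesis
  proof (intro exI[of _ K] exI[of _ \<delta>0] conjI d0(1) allI impI)
    fix Y assume "\<exists>y\<in>Y. dist y x0 < \<delta>0"
    then obtain y where y: "y \<in> Y" "dist y x0 < \<delta>0" by blast
    define z where "z = traj f y \<pi>0 K"
    define z0 where "z0 = traj f x0 \<pi>0 K"
    have "dist z z0 < \<eta> / (2 * C)" using d0 y pi0 by (simp add: z_def z0_def)
    then have "C * norm (z - z0) < \<eta> / 2" using C by (simp add: dist_norm field_simps)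
    then have nz: "nrm (z - z0) < \<eta> / 2" using C by (meson le_less_trans)
    have dz: "ndist nrm z A < \<eta>"
      using ndist_lip[OF norm A_ne, of z z0] nz K by (simp add: z0_def)
    have dz0: "0 \<le> ndist nrm z A" by (rule ndist_nonneg[OF norm A_ne])
    then obtain \<pi>1 where pi1: "\<forall>j. \<pi>1 j \<in> U"
      "\<forall>k. ndist nrm (traj f z \<pi>1 k) A \<le> M * lam (ndist nrm z A) k"
      using stab[rule_format, of z] dz eta(2) by auto
    define \<pi> where "\<pi> = (\<lambda>i. if i < K then \<pi>0 i else \<pi>1 (i - K))"
    have piU: "\<forall>j. \<pi> j \<in> U" using pi0 pi1 by (simp add: \<pi>_def)
    define s where "s = ndist nrm z A"
    have s: "s \<in> {0..\<eta>}" using dz dz0 by (simp add: s_def)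
    have sr: "s \<in> {0..r}" using s eta by auto
    have bnd: "Psi \<alpha> (reach f U Y (j + K)) \<le> \<alpha>hi * (M * lam s j) powr pbar" for j
    proof -
      have "Psi \<alpha> (reach f U Y (j + K)) \<le> \<alpha> (traj f y \<pi> (j + K))"
        by (rule Psi_le[OF \<alpha>_nonneg y(1) piU])
      also have "traj f y \<pi> (j + K) = traj f z \<pi>1 j"
        using traj_append[of f y K \<pi>0 \<pi>1 j] by (simp add: \<pi>_def z_def add.commute)
      also have "\<alpha> (traj f z \<pi>1 j) \<le> \<alpha>hi * ndist nrm (traj f z \<pi>1 j) A powr pbar"
        using \<alpha>_up by blast
      also have "\<dots> \<le> \<alpha>hi * (M * lam s j) powr pbar"
        using pi1(2) ndist_nonneg[OF norm A_ne] \<alpha>hi_pos pbar_ge p_pos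
        by (intro mult_left_mono powr_mono2) (auto simp: s_def)
      finally show ?thesis .
    qed
    have nn: "0 \<le> Psi \<alpha> (reach f U Y (j + K))" for j
      using Psi_nonneg[OF \<alpha>_nonneg _ U_ne] y by blast
    have sm: "summable (\<lambda>j. Psi \<alpha> (reach f U Y (j + K)))"
      by (rule summable_comparison_test'[where N=0, OF conjunct1[OF eta(3)[rule_format, OF s]]])
         (use bnd nn in auto)
    have "(\<Sum>j. Psi \<alpha> (reach f U Y (j + K))) \<le> (\<Sum>j. \<alpha>hi * (M * lam s j) powr pbar)"
      by (rule suminf_le[OF bnd sm conjunct1[OF eta(3)[rule_format, OF s]]])
    also have "\<dots> \<le> \<epsilon>" using eta(3) s by blast
    finally show "(\<Sum>j. Psi \<alpha> (reach f U Y (j + K))) \<le> \<epsilon>" .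
    show "summable (\<lambda>j. Psi \<alpha> (reach f U Y (j + K)))" by (rule sm)
  qed
qed


theorem theorem7:
  fixes nrm :: "real^'n \<Rightarrow> real"
    and f :: "real^'n \<Rightarrow> real^'m \<Rightarrow> real^'n"
    and U :: "(real^'m) set"
    and A :: "(real^'n) set"
    and r M p :: real
    and lam :: "real \<Rightarrow> nat \<Rightarrow> real"
    and \<alpha> :: "real^'n \<Rightarrow> real"
    and \<alpha>lo \<alpha>hi pbar :: real
  assumes norm: "is_norm nrm"
    and f_cont: "continuous_on UNIV (\<lambda>(x, u). f x u)"
    and U_compact: "compact U" and U_ne: "U \<noteq> {}"
    and A_compact: "compact A" and A_ne: "A \<noteq> {}"
    and A_inv: "\<forall>x\<in>A. \<exists>u\<in>U. f x u \<in> A"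
    and r_pos: "r > 0" and M_ge: "M \<ge> 1" and p_pos: "p > 0"
    and lam_nonneg: "\<forall>s\<in>{0..r}. \<forall>k. lam s k \<ge> 0"
    and lam_cont: "\<forall>k. continuous_on {0..r} (\<lambda>s. lam s k)"
    and lam_mono: "\<forall>k. mono_on {0..r} (\<lambda>s. lam s k)"
    and lam_zero: "\<forall>k. lam 0 k = 0"
    and lam_antimono: "\<forall>s\<in>{0..r}. \<forall>k l. k \<le> l \<longrightarrow> lam s l \<le> lam s k"
    and lam_init: "\<forall>s\<in>{0..r}. lam s 0 \<le> s"
    and lam_summable: "summable (\<lambda>k. lam r k powr p)"
    and stab: "\<forall>x. ndist nrm x A \<le> r \<longrightarrow>
                 (\<exists>\<pi>. (\<forall>j. \<pi> j \<in> U) \<and>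
                    (\<forall>k. ndist nrm (traj f x \<pi> k) A \<le> M * lam (ndist nrm x A) k))"
    and \<alpha>_cont: "continuous_on UNIV \<alpha>"
    and \<alpha>_nonneg: "\<forall>x. \<alpha> x \<ge> 0"
    and \<alpha>lo_pos: "\<alpha>lo > 0" and \<alpha>hi_pos: "\<alpha>hi > 0" and pbar_ge: "pbar \<ge> p"
    and \<alpha>_bounds: "\<forall>x. \<alpha>lo * ndist nrm x A powr pbar \<le> \<alpha> x
                      \<and> \<alpha> x \<le> \<alpha>hi * ndist nrm x A powr pbar"
  shows "\<forall>X \<in> {X. compact X \<and> X \<noteq> {} \<and> X \<inter> domA nrm f U A \<noteq> {}}.
           \<forall>S. open S \<and> Vfun \<alpha> f U X \<in> S \<longrightarrow>
             (\<exists>\<delta>>0. \<forall>Y \<in> {X. compact X \<and> X \<noteq> {} \<and> X \<inter> domA nrm f U A \<noteq> {}}.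
                 nhausdist nrm Y X < \<delta> \<longrightarrow> Vfun \<alpha> f U Y \<in> S)"
proof (intro ballI allI impI)
  define KD where "KD = {X. compact X \<and> X \<noteq> {} \<and> X \<inter> domA nrm f U A \<noteq> {}}"
  define P where "P Y k = Psi \<alpha> (reach f U Y k)" for Y k
  define G where "G Y = (\<Sum>k. P Y k)" for Y
  have \<alpha>_up: "\<forall>x. \<alpha> x \<le> \<alpha>hi * ndist nrm x A powr pbar" using \<alpha>_bounds by blast
  have tailK: "\<exists>K \<delta>0. \<delta>0 > 0 \<and> (\<forall>Y. (\<exists>y\<in>Y. dist y x0 < \<delta>0) \<longrightarrow>
            summable (\<lambda>j. P Y (j + K)) \<and> (\<Sum>j. P Y (j + K)) \<le> \<epsilon>)"
    if x0: "x0 \<in> domA nrm f U A" and e: "\<epsilon> > 0" for x0 \<epsilon>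
  proof -
    obtain \<eta> where eta: "\<eta> > 0" "\<eta> \<le> r" "\<forall>s\<in>{0..\<eta>}. summable (\<lambda>j. \<alpha>hi * (M * lam s j) powr pbar)
            \<and> (\<Sum>j. \<alpha>hi * (M * lam s j) powr pbar) \<le> \<epsilon>"
      using lam_tail[OF r_pos M_ge p_pos lam_nonneg lam_cont lam_mono lam_zero lam_antimono
          lam_init lam_summable \<alpha>hi_pos pbar_ge e] by blast
    show ?thesis unfolding P_def
      by (rule tail_lemma[OF norm f_cont U_compact U_ne A_ne M_ge lam_nonneg stab \<alpha>_nonneg
          \<alpha>hi_pos pbar_ge p_pos \<alpha>_up eta x0])
  qed
  have Pnn: "0 \<le> P Y k" if "Y \<noteq> {}" for Y k
    unfolding P_def using Psi_nonneg[OF \<alpha>_nonneg that U_ne] .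
  have summ: "summable (P Y)" if YK0: "Y \<in> KD" for Y
  proof -
    obtain y where y: "y \<in> Y" "y \<in> domA nrm f U A" using YK0 by (auto simp: KD_def)
    obtain K \<delta>0 where "\<delta>0 > 0" "\<forall>Y. (\<exists>y'\<in>Y. dist y' y < \<delta>0) \<longrightarrow>
            summable (\<lambda>j. P Y (j + K)) \<and> (\<Sum>j. P Y (j + K)) \<le> 1"
      using tailK[OF y(2), of 1] by auto
    then have "summable (\<lambda>j. P Y (j + K))" using y(1) by force
    then show ?thesis by simp
  qed
  have Veq: "Vfun \<alpha> f U Y = ennreal (G Y)" if YK1: "Y \<in> KD" for Y
  proof -
    have PY: "P Y = (\<lambda>k. Psi \<alpha> (reach f U Y k))" by (simp add: P_def fun_eq_iff)
    have "Y \<noteq> {}" using YK1 by (simp add: KD_def)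
    then have "(\<Sum>k. ennreal (P Y k)) = ennreal (\<Sum>k. P Y k)"
      using Pnn summ[OF YK1] by (intro suminf_ennreal2) auto
    then show ?thesis unfolding Vfun_def G_def P_def .
  qed
  fix X S
  assume XK: "X \<in> {X. compact X \<and> X \<noteq> {} \<and> X \<inter> domA nrm f U A \<noteq> {}}"
    and S: "open S \<and> Vfun \<alpha> f U X \<in> S"
  have X: "X \<in> KD" using XK by (simp add: KD_def)
  have "ennreal (G X) \<in> S" using S Veq[OF X] by simp
  then have "\<forall>\<^sub>F w in at (G X). ennreal w \<in> S"
    using isCont_ennreal[of "G X"] S unfolding isCont_def tendsto_def by blast
  then obtain e where e: "e > 0" "\<forall>w. w \<noteq> G X \<and> dist w (G X) < e \<longrightarrow> ennreal w \<in> S"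
    unfolding eventually_at by auto
  obtain x0 where x0: "x0 \<in> X" "x0 \<in> domA nrm f U A" using X by (auto simp: KD_def)
  obtain K \<delta>0 where K: "\<delta>0 > 0" "\<forall>Y. (\<exists>y\<in>Y. dist y x0 < \<delta>0) \<longrightarrow>
            summable (\<lambda>j. P Y (j + K)) \<and> (\<Sum>j. P Y (j + K)) \<le> e / 3"
    using tailK[OF x0(2), of "e/3"] e by auto
  define e1 where "e1 = e / (3 * (real K + 1))"
  have e1: "e1 > 0" using e by (simp add: e1_def)
  have cX: "compact X" using X by (simp add: KD_def)
  obtain \<delta>1 where d1: "\<delta>1 > 0" "\<forall>k<K. \<forall>x\<in>X. \<forall>y. dist y x < \<delta>1 \<longrightarrow>
           (\<forall>\<pi>. (\<forall>j::nat. \<pi> j \<in> U) \<longrightarrow> \<bar>\<alpha> (traj f y \<pi> k) - \<alpha> (traj f x \<pi> k)\<bar> < e1)"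
    using g_unif_fin[OF f_cont U_compact cX \<alpha>_cont e1, of K] by blast
  obtain c where c: "c > 0" "\<forall>x. norm x \<le> c * nrm x" using nrm_lower[OF norm] by blast
  define \<delta> where "\<delta> = min \<delta>0 \<delta>1 / c"
  show "\<exists>\<delta>>0. \<forall>Y\<in>{X. compact X \<and> X \<noteq> {} \<and> X \<inter> domA nrm f U A \<noteq> {}}.
                 nhausdist nrm Y X < \<delta> \<longrightarrow> Vfun \<alpha> f U Y \<in> S"
  proof (intro exI[of _ \<delta>] conjI ballI impI)
    show "\<delta> > 0" using K d1 c by (simp add: \<delta>_def)
    fix Y assume YK: "Y \<in> {X. compact X \<and> X \<noteq> {} \<and> X \<inter> domA nrm f U A \<noteq> {}}"
      and H: "nhausdist nrm Y X < \<delta>"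
    have Y: "Y \<in> KD" using YK by (simp add: KD_def)
    have cY: "compact Y" "Y \<noteq> {}" using Y by (auto simp: KD_def)
    have neX: "X \<noteq> {}" using X by (auto simp: KD_def)
    have conv: "dist a b < min \<delta>0 \<delta>1" if "nrm (a - b) < \<delta> \<or> nrm (b - a) < \<delta>" for a b
    proof -
      have "norm (a - b) \<le> c * nrm (a - b)" "norm (b - a) \<le> c * nrm (b - a)" using c by auto
      moreover have "c * \<delta> = min \<delta>0 \<delta>1" using c by (simp add: \<delta>_def)
      moreover have "c * nrm (a - b) < c * \<delta> \<or> c * nrm (b - a) < c * \<delta>"
        using that c by auto
      ultimately show ?thesis by (auto simp: dist_norm norm_minus_commute)
    qed
    have h1: "\<forall>y\<in>Y. \<exists>x\<in>X. dist y x < min \<delta>0 \<delta>1"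
      using haus_close(1)[OF norm cX cY(1) neX cY(2) H] conv by blast
    have h2: "\<forall>x\<in>X. \<exists>y\<in>Y. dist y x < min \<delta>0 \<delta>1"
      using haus_close(2)[OF norm cX cY(1) neX cY(2) H] conv by blast
    have close: "\<bar>P Y k - P X k\<bar> \<le> e1" if "k < K" for k
      unfolding P_def
    proof (rule Psi_close[OF \<alpha>_nonneg neX cY(2) U_ne])
      show "\<forall>x\<in>X. \<forall>y. dist y x < min \<delta>0 \<delta>1 \<longrightarrow>
           (\<forall>\<pi>. (\<forall>j::nat. \<pi> j \<in> U) \<longrightarrow> \<bar>\<alpha> (traj f y \<pi> k) - \<alpha> (traj f x \<pi> k)\<bar> < e1)"
        using d1 that by auto
    qed (use h1 h2 in auto)
    obtain y where y: "y \<in> Y" "dist y x0 < min \<delta>0 \<delta>1" using h2 x0 by blast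
    have tY: "summable (\<lambda>j. P Y (j + K))" "(\<Sum>j. P Y (j + K)) \<le> e / 3"
      using K(2) y by auto
    have tX: "summable (\<lambda>j. P X (j + K))" "(\<Sum>j. P X (j + K)) \<le> e / 3"
    proof -
      have "\<exists>y\<in>X. dist y x0 < \<delta>0" using K(1) x0(1) by (intro bexI[of _ x0]) auto
      then show "summable (\<lambda>j. P X (j + K))" "(\<Sum>j. P X (j + K)) \<le> e / 3"
        using K(2) by blast+
    qed
    have tY0: "0 \<le> (\<Sum>j. P Y (j + K))" using Pnn[OF cY(2)] tY(1) by (intro suminf_nonneg) auto
    have tX0: "0 \<le> (\<Sum>j. P X (j + K))" using Pnn[OF neX] tX(1) by (intro suminf_nonneg) auto
    have GY: "G Y = (\<Sum>j. P Y (j + K)) + (\<Sum>k<K. P Y k)"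
      unfolding G_def by (rule suminf_split_initial_segment[OF summ[OF Y]])
    have GX: "G X = (\<Sum>j. P X (j + K)) + (\<Sum>k<K. P X k)"
      unfolding G_def by (rule suminf_split_initial_segment[OF summ[OF X]])
    have "\<bar>(\<Sum>k<K. P Y k) - (\<Sum>k<K. P X k)\<bar> = \<bar>\<Sum>k<K. P Y k - P X k\<bar>"
      by (simp add: sum_subtractf)
    also have "\<dots> \<le> (\<Sum>k<K. \<bar>P Y k - P X k\<bar>)" by (rule sum_abs)
    also have "\<dots> \<le> real K * e1"
      using sum_bounded_above[of "{..<K}" "\<lambda>k. \<bar>P Y k - P X k\<bar>" e1] close by simp
    also have "\<dots> < e / 3"
    proof -
      have "real K * e1 = e / 3 * (real K / (real K + 1))" by (simp add: e1_def field_simps)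
      also have "\<dots> < e / 3 * 1" using e by (intro mult_strict_left_mono) auto
      finally show ?thesis by simp
    qed
    finally have fin: "\<bar>(\<Sum>k<K. P Y k) - (\<Sum>k<K. P X k)\<bar> < e / 3" .
    have "dist (G Y) (G X) < e"
      unfolding dist_real_def GY GX using fin tY(2) tX(2) tY0 tX0 by linarith
    then show "Vfun \<alpha> f U Y \<in> S"
      using e(2) Veq[OF Y] Veq[OF X] S by (cases "G Y = G X") auto
  qed
qed

end
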